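(* Let $P$ be a right LCM monoid and let $T:P\to\mathcal{B}(\mathcal{H})$ be a contractive representation satisfying the following condition: for every finite subset $F\subset P$, \[Z(F)=\sum_{U\subseteq F}(-1)^{|U|}T_{\vee U}T_{\vee U}^*\geq 0 .\] Let $F\subset P$ be a finite set and let $c_F=\max\{|U| : U\subset F,\ \vee U\neq\infty\}$. Then for every $h\in\mathcal{H}$, \[\sum_{p\in F}\|T_p^*h\|^2\leq c_F\|h\|^2.\]
   Context: A monoid $P$ is right LCM if for all $p,q\in P$, either $pP\cap qP=\emptyset$ or $pP\cap qP=rP$ for some $r\in P$. For finite $U\subset P$, write $\vee U=\infty$ if $\bigcap_{p\in U}pP=\emptyset$, and otherwise $\vee U=r$ for some $r$ with $\bigcap_{p\in U}pP=rP$; by convention $\vee\emptyset$ is the identity $e$ of $P$. A contractive representation is a unital monoid homomorphism $p\mapsto T_p$ into the contractions on a Hilbert space $\mathcal{H}$ (so $T_e=I$), and $T_{\vee U}:=0$ when $\vee U=\infty$. Here $|U|$ denotes the cardinality of $U$. *)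

theory Defs
  imports "HOL-Analysis.Analysis"
begin

definition rideal :: "'p::monoid_mult \<Rightarrow> 'p set" where
  "rideal p = range (\<lambda>x. p * x)"

definition right_LCM :: "'p::monoid_mult itself \<Rightarrow> bool" where
  "right_LCM _ \<longleftrightarrow> (\<forall>p q::'p. rideal p \<inter> rideal q = {} \<or> (\<exists>r. rideal p \<inter> rideal q = rideal r))"

text \<open>A choice of joins: J U = None encodes \<open>\<or>U = \<infinity>\<close>, J U = Some r encodes \<open>\<or>U = r\<close>;
  by convention J {} = Some 1.\<close>
definition join_choice :: "('p::monoid_mult set \<Rightarrow> 'p option) \<Rightarrow> bool" where
  "join_choice J \<longleftrightarrow> J {} = Some 1 \<and>
     (\<forall>U. finite U \<and> U \<noteq> {} \<longrightarrow>
        (case J U of None \<Rightarrow> (\<Inter>p\<in>U. rideal p) = {}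
                   | Some r \<Rightarrow> (\<Inter>p\<in>U. rideal p) = rideal r))"

definition contractive_rep :: "('p::monoid_mult \<Rightarrow> ('h::real_normed_vector \<Rightarrow>\<^sub>L 'h)) \<Rightarrow> bool" where
  "contractive_rep T \<longleftrightarrow> T 1 = id_blinfun \<and> (\<forall>p q. T (p * q) = T p o\<^sub>L T q) \<and> (\<forall>p. norm (T p) \<le> 1)"

definition adjoint_family :: "('p \<Rightarrow> ('h::real_inner \<Rightarrow>\<^sub>L 'h)) \<Rightarrow> ('p \<Rightarrow> ('h \<Rightarrow>\<^sub>L 'h)) \<Rightarrow> bool" where
  "adjoint_family T Ta \<longleftrightarrow> (\<forall>p x y. inner (T p x) y = inner x (Ta p y))"

definition Tjoin :: "('p set \<Rightarrow> 'p option) \<Rightarrow> ('p \<Rightarrow> ('h::real_normed_vector \<Rightarrow>\<^sub>L 'h)) \<Rightarrow> 'p set \<Rightarrow> ('h \<Rightarrow>\<^sub>L 'h)" where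
  "Tjoin J T U = (case J U of None \<Rightarrow> 0 | Some r \<Rightarrow> T r)"

definition Zop :: "('p set \<Rightarrow> 'p option) \<Rightarrow> ('p \<Rightarrow> ('h::real_normed_vector \<Rightarrow>\<^sub>L 'h)) \<Rightarrow> ('p \<Rightarrow> ('h \<Rightarrow>\<^sub>L 'h)) \<Rightarrow> 'p set \<Rightarrow> 'h \<Rightarrow> 'h" where
  "Zop J T Ta F h = (\<Sum>U\<in>Pow F. ((-1::real) ^ card U) *\<^sub>R (Tjoin J T U (Tjoin J Ta U h)))"

definition positive_op :: "('h::real_inner \<Rightarrow> 'h) \<Rightarrow> bool" where
  "positive_op A \<longleftrightarrow> (\<forall>h. inner (A h) h \<ge> 0)"

definition cF :: "('p set \<Rightarrow> 'p option) \<Rightarrow> 'p set \<Rightarrow> nat" where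
  "cF J F = Max {card U | U. U \<subseteq> F \<and> J U \<noteq> None}"

end

theory Submission
  imports Defs
begin


lemma alt_sum_super:
  assumes "finite V" "U \<subseteq> V"
  shows "(\<Sum>W | U \<subseteq> W \<and> W \<subseteq> V. (-1::real)^card W) = (if U = V then (-1)^card U else 0)"
proof (cases "U = V")
  case True
  then have "{W. U \<subseteq> W \<and> W \<subseteq> V} = {U}" by auto
  then show ?thesis using True by simp
next
  case False
  then have "U \<subset> V" using assms by auto
  have fin: "finite {W. U \<subseteq> W \<and> W \<subseteq> V}" using assms(1) by (simp add: finite_subset[of _ "Pow V"] subset_iff)
  have "(\<Sum>W | U \<subseteq> W \<and> W \<subseteq> V. (-1::real)^card W) = 0"
    apply (rule sum_alternating_cancels[OF fin])
    using card_subsupersets_even_odd[OF assms(1) \<open>U \<subset> V\<close>]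
    by (simp add: conj_commute conj_left_commute)
  then show ?thesis using False by simp
qed

lemma alt_sum_pow:
  assumes "finite V"
  shows "(\<Sum>W\<in>Pow V. (-1::real)^card W) = (if V = {} then 1 else 0)"
proof -
  have "Pow V = {W. {} \<subseteq> W \<and> W \<subseteq> V}" by auto
  then show ?thesis using alt_sum_super[OF assms, of "{}"] by auto
qed

definition mu :: "'a set \<Rightarrow> ('a set \<Rightarrow> real) \<Rightarrow> 'a set \<Rightarrow> real" where
  "mu F A W = (-1)^card W * (\<Sum>V | W \<subseteq> V \<and> V \<subseteq> F. (-1)^card V * A V)"

lemma mobius_super:
  assumes "finite F" "U \<subseteq> F"
  shows "A U = (\<Sum>W | U \<subseteq> W \<and> W \<subseteq> F. mu F A W)"
proof -
  have finS: "\<And>X. finite {W. X \<subseteq> W \<and> W \<subseteq> F}"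
    using assms(1) by (simp add: finite_subset[of _ "Pow F"] subset_iff)
  have "(\<Sum>W | U \<subseteq> W \<and> W \<subseteq> F. mu F A W)
     = (\<Sum>W\<in>{W. U \<subseteq> W \<and> W \<subseteq> F}. \<Sum>V\<in>{V\<in>{V. U \<subseteq> V \<and> V \<subseteq> F}. W \<subseteq> V}. (-1)^card W * ((-1)^card V * A V))"
    unfolding mu_def sum_distrib_left
    apply (rule sum.cong[OF refl]) apply (rule sum.cong) by auto
  also have "\<dots> = (\<Sum>V\<in>{V. U \<subseteq> V \<and> V \<subseteq> F}. \<Sum>W\<in>{W\<in>{W. U \<subseteq> W \<and> W \<subseteq> F}. W \<subseteq> V}. (-1)^card W * ((-1)^card V * A V))"
    by (rule sum.swap_restrict[OF finS finS])
  also have "\<dots> = (\<Sum>V\<in>{V. U \<subseteq> V \<and> V \<subseteq> F}. (\<Sum>W | U \<subseteq> W \<and> W \<subseteq> V. (-1::real)^card W) * ((-1)^card V * A V))"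
    unfolding sum_distrib_right
    apply (rule sum.cong[OF refl]) apply (rule sum.cong) by auto
  also have "\<dots> = (\<Sum>V\<in>{V. U \<subseteq> V \<and> V \<subseteq> F}. if V = U then A U else 0)"
  proof (rule sum.cong[OF refl])
    fix V assume V: "V \<in> {V. U \<subseteq> V \<and> V \<subseteq> F}"
    then have "finite V" using assms(1) finite_subset by blast
    then show "(\<Sum>W | U \<subseteq> W \<and> W \<subseteq> V. (-1::real)^card W) * ((-1)^card V * A V) = (if V = U then A U else 0)"
      using alt_sum_super[of V U] V by (auto simp flip: power_add mult.assoc)
  qed
  also have "\<dots> = A U" using finS[of U] assms(2) by (simp add: sum.delta')
  finally show ?thesis by simp
qed

definition Cs :: "'a set \<Rightarrow> nat \<Rightarrow> 'a set set" where
  "Cs F k = {U. U \<subseteq> F \<and> card U = k}"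

definition Sk :: "'a set \<Rightarrow> ('a set \<Rightarrow> real) \<Rightarrow> nat \<Rightarrow> real" where
  "Sk F A k = (\<Sum>V\<in>Pow (Cs F k). (-1)^card V * A (\<Union>V))"

lemma finite_Cs: "finite F \<Longrightarrow> finite (Cs F k)"
  unfolding Cs_def by (rule finite_subset[of _ "Pow F"]) auto

lemma Cs_empty_iff: "finite W \<Longrightarrow> Cs W k = {} \<longleftrightarrow> card W < k"
proof
  assume "finite W" "Cs W k = {}"
  show "card W < k"
  proof (rule ccontr)
    assume "\<not> card W < k"
    then have "k \<le> card W" by simp
    then obtain U where "U \<subseteq> W" "card U = k" using obtain_subset_with_card_n by metis
    then have "U \<in> Cs W k" unfolding Cs_def by simp
    then show False using \<open>Cs W k = {}\<close> by simp
  qed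
next
  assume fw: "finite W" and lt: "card W < k"
  show "Cs W k = {}"
  proof (rule ccontr)
    assume "Cs W k \<noteq> {}"
    then obtain U where "U \<subseteq> W" "card U = k" unfolding Cs_def by blast
    then have "k \<le> card W" using card_mono[OF fw] by blast
    then show False using lt by simp
  qed
qed

lemma Sk_mu:
  assumes "finite F"
  shows "Sk F A k = (\<Sum>W\<in>Pow F. mu F A W * (if card W < k then 1 else 0))"
proof -
  have finP: "finite (Pow (Cs F k))" using finite_Cs[OF assms] by simp
  have "Sk F A k = (\<Sum>V\<in>Pow (Cs F k). \<Sum>W\<in>{W\<in>Pow F. \<Union>V \<subseteq> W}. (-1)^card V * mu F A W)"
    unfolding Sk_def
  proof (rule sum.cong[OF refl])
    fix V assume V: "V \<in> Pow (Cs F k)"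
    then have "\<Union>V \<subseteq> F" unfolding Cs_def by auto
    then have "A (\<Union>V) = (\<Sum>W | \<Union>V \<subseteq> W \<and> W \<subseteq> F. mu F A W)"
      by (rule mobius_super[OF assms])
    moreover have "{W. \<Union>V \<subseteq> W \<and> W \<subseteq> F} = {W\<in>Pow F. \<Union>V \<subseteq> W}" by auto
    ultimately show "(-1)^card V * A (\<Union>V) = (\<Sum>W\<in>{W\<in>Pow F. \<Union>V \<subseteq> W}. (-1)^card V * mu F A W)"
      by (simp add: sum_distrib_left)
  qed
  also have "\<dots> = (\<Sum>W\<in>Pow F. \<Sum>V\<in>{V\<in>Pow (Cs F k). \<Union>V \<subseteq> W}. (-1)^card V * mu F A W)"
    by (rule sum.swap_restrict[OF finP]) (simp add: assms)
  also have "\<dots> = (\<Sum>W\<in>Pow F. mu F A W * (if card W < k then 1 else 0))"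
  proof (rule sum.cong[OF refl])
    fix W assume W: "W \<in> Pow F"
    then have fW: "finite W" using assms finite_subset by blast
    have "{V\<in>Pow (Cs F k). \<Union>V \<subseteq> W} = Pow (Cs W k)"
      using W unfolding Cs_def by auto
    then have "(\<Sum>V\<in>{V\<in>Pow (Cs F k). \<Union>V \<subseteq> W}. (-1)^card V * mu F A W)
        = (\<Sum>V\<in>Pow (Cs W k). (-1::real)^card V) * mu F A W"
      by (simp add: sum_distrib_right)
    also have "\<dots> = mu F A W * (if card W < k then 1 else 0)"
      using alt_sum_pow[OF finite_Cs[OF fW, of k]] Cs_empty_iff[OF fW, of k] by simp
    finally show "(\<Sum>V\<in>{V\<in>Pow (Cs F k). \<Union>V \<subseteq> W}. (-1)^card V * mu F A W) = mu F A W * (if card W < k then 1 else 0)" .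
  qed
  finally show ?thesis .
qed

lemma count_sum: "(\<Sum>k\<in>{1..c}. (if (n::nat) < k then 1 else 0::real)) = real (c - n)"
  by (induction c) (auto simp: Suc_diff_le)

lemma mu_zero:
  assumes "finite F" "W \<subseteq> F" "card W > c" "\<And>V. V \<subseteq> F \<Longrightarrow> card V > c \<Longrightarrow> A V = 0"
  shows "mu F A W = 0"
proof -
  have "\<And>V. W \<subseteq> V \<Longrightarrow> V \<subseteq> F \<Longrightarrow> A V = 0"
  proof -
    fix V assume "W \<subseteq> V" "V \<subseteq> F"
    then have "card W \<le> card V" using card_mono finite_subset[OF _ assms(1)] by blast
    then show "A V = 0" using assms(3,4) \<open>V \<subseteq> F\<close> by simp
  qed
  then show ?thesis unfolding mu_def by simp
qed

lemma main_identity: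
  assumes "finite F" "\<And>V. V \<subseteq> F \<Longrightarrow> card V > c \<Longrightarrow> A V = 0"
  shows "(\<Sum>k\<in>{1..c}. Sk F A k) = real c * A {} - (\<Sum>p\<in>F. A {p})"
proof -
  have "(\<Sum>k\<in>{1..c}. Sk F A k) = (\<Sum>W\<in>Pow F. mu F A W * (\<Sum>k\<in>{1..c}. (if card W < k then 1 else 0)))"
    unfolding Sk_mu[OF assms(1)] sum_distrib_left by (rule sum.swap)
  also have "\<dots> = (\<Sum>W\<in>Pow F. mu F A W * (real c - real (card W)))"
  proof (rule sum.cong[OF refl])
    fix W assume W: "W \<in> Pow F"
    show "mu F A W * (\<Sum>k\<in>{1..c}. (if card W < k then 1 else 0)) = mu F A W * (real c - real (card W))"
    proof (cases "card W \<le> c")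
      case True
      have e: "(\<Sum>k\<in>{1..c}. (if card W < k then 1 else 0::real)) = real c - real (card W)"
        unfolding count_sum of_nat_diff[OF True] ..
      show ?thesis unfolding e ..
    next
      case False then have "mu F A W = 0" using mu_zero[of F W c A] assms W by simp
      then show ?thesis by simp
    qed
  qed
  also have "\<dots> = real c * (\<Sum>W\<in>Pow F. mu F A W) - (\<Sum>W\<in>Pow F. real (card W) * mu F A W)"
    by (simp add: algebra_simps sum_distrib_left sum_subtractf)
  also have "(\<Sum>W\<in>Pow F. mu F A W) = A {}"
  proof -
    have "Pow F = {W. {} \<subseteq> W \<and> W \<subseteq> F}" by auto
    then show ?thesis using mobius_super[OF assms(1), of "{}" A] by simp
  qed
  also have "(\<Sum>W\<in>Pow F. real (card W) * mu F A W) = (\<Sum>W\<in>Pow F. \<Sum>p\<in>{p\<in>F. p \<in> W}. mu F A W)"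
  proof (rule sum.cong[OF refl])
    fix W assume "W \<in> Pow F"
    then have "{p\<in>F. p \<in> W} = W" by auto
    then show "real (card W) * mu F A W = (\<Sum>p\<in>{p\<in>F. p \<in> W}. mu F A W)" by simp
  qed
  also have "\<dots> = (\<Sum>p\<in>F. \<Sum>W\<in>{W\<in>Pow F. p \<in> W}. mu F A W)"
    by (rule sum.swap_restrict) (simp_all add: assms(1))
  also have "\<dots> = (\<Sum>p\<in>F. A {p})"
  proof (rule sum.cong[OF refl])
    fix p assume "p \<in> F"
    then have "{W\<in>Pow F. p \<in> W} = {W. {p} \<subseteq> W \<and> W \<subseteq> F}" by auto
    then show "(\<Sum>W\<in>{W\<in>Pow F. p \<in> W}. mu F A W) = A {p}"
      using mobius_super[OF assms(1), of "{p}" A] \<open>p \<in> F\<close> by simp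
  qed
  finally show ?thesis .
qed



lemma sum_pow_insert:
  assumes "finite A" "a \<notin> A"
  shows "(\<Sum>S\<in>Pow (insert a A). f S) = (\<Sum>S\<in>Pow A. f S) + (\<Sum>S\<in>Pow A. f (insert a S))"
proof -
  have inj: "inj_on (insert a) (Pow A)"
  proof (rule inj_onI)
    fix x y assume "x \<in> Pow A" "y \<in> Pow A" "insert a x = insert a y"
    then have "a \<notin> x" "a \<notin> y" using assms(2) by auto
    then show "x = y" using \<open>insert a x = insert a y\<close> by (metis Diff_insert_absorb)
  qed
  have disj: "Pow A \<inter> insert a ` Pow A = {}" using assms(2) by blast
  have "(\<Sum>S\<in>Pow (insert a A). f S) = (\<Sum>S\<in>Pow A. f S) + (\<Sum>S\<in>insert a ` Pow A. f S)"
    unfolding Pow_insert by (rule sum.union_disjoint) (use assms(1) disj in auto)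
  also have "(\<Sum>S\<in>insert a ` Pow A. f S) = (\<Sum>S\<in>Pow A. f (insert a S))"
    by (rule sum.reindex[OF inj, unfolded comp_def])
  finally show ?thesis .
qed

lemma fiber_sum:
  fixes g :: "'b set \<Rightarrow> real"
  assumes "finite X"
  shows "(\<Sum>S\<in>Pow X. (-1)^card S * g (\<phi> ` S)) = (\<Sum>T\<in>Pow (\<phi> ` X). (-1)^card T * g T)"
  using assms
proof (induction X arbitrary: g rule: finite_induct)
  case empty
  then show ?case by simp
next
  case (insert x X)
  let ?y = "\<phi> x"
  have c: "\<And>S. S \<in> Pow X \<Longrightarrow> card (insert x S) = Suc (card S)"
    using insert(1,2) by (meson PowD card_insert_disjoint finite_subset subsetD)
  have "(\<Sum>S\<in>Pow (insert x X). (-1)^card S * g (\<phi> ` S))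
     = (\<Sum>S\<in>Pow X. (-1)^card S * g (\<phi> ` S)) - (\<Sum>S\<in>Pow X. (-1)^card S * g (insert ?y (\<phi> ` S)))"
    unfolding sum_pow_insert[OF insert(1,2)] by (simp add: c sum_negf[symmetric])
  also have "\<dots> = (\<Sum>T\<in>Pow (\<phi> ` X). (-1)^card T * g T) - (\<Sum>T\<in>Pow (\<phi> ` X). (-1)^card T * g (insert ?y T))"
    using insert(3)[of g] insert(3)[of "\<lambda>T. g (insert ?y T)"] by simp
  also have "\<dots> = (\<Sum>T\<in>Pow (\<phi> ` insert x X). (-1)^card T * g T)"
  proof (cases "?y \<in> \<phi> ` X")
    case False
    have fin: "finite (\<phi> ` X)" using insert(1) by simp
    have c2: "\<And>T. T \<in> Pow (\<phi> ` X) \<Longrightarrow> card (insert ?y T) = Suc (card T)"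
      using False fin by (meson PowD card_insert_disjoint finite_subset subsetD)
    show ?thesis
      unfolding image_insert sum_pow_insert[OF fin False] by (simp add: c2 sum_negf[symmetric])
  next
    case True
    define Y where "Y = \<phi> ` X - {?y}"
    have finY: "finite Y" using insert(1) Y_def by simp
    have yY: "?y \<notin> Y" using Y_def by simp
    have eq: "\<phi> ` X = insert ?y Y" using True Y_def by auto
    have c3: "\<And>T. T \<in> Pow Y \<Longrightarrow> card (insert ?y T) = Suc (card T)"
      using yY finY by (meson PowD card_insert_disjoint finite_subset subsetD)
    have "(\<Sum>T\<in>Pow (\<phi> ` X). (-1)^card T * g (insert ?y T)) = 0"
      unfolding eq sum_pow_insert[OF finY yY] by (simp add: c3 sum_negf)
    moreover have "\<phi> ` insert x X = \<phi> ` X" using True by auto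
    ultimately show ?thesis by simp
  qed
  finally show ?case .
qed



lemma rideal_self: "r \<in> rideal (r::'p::monoid_mult)"
  unfolding rideal_def by (metis mult_1_right rangeI)

lemma rideal_one: "rideal (1::'p::monoid_mult) = UNIV"
  unfolding rideal_def by auto

lemma jc_props:
  assumes "join_choice J" "finite U"
  shows "(J U = None \<longleftrightarrow> (\<Inter>p\<in>U. rideal p) = {}) \<and> (\<forall>r. J U = Some r \<longrightarrow> (\<Inter>p\<in>U. rideal p) = rideal r)"
proof (cases "U = {}")
  case True
  then show ?thesis using assms(1) unfolding join_choice_def by (auto simp: rideal_one)
next
  case False
  then have "case J U of None \<Rightarrow> (\<Inter>p\<in>U. rideal p) = {} | Some r \<Rightarrow> (\<Inter>p\<in>U. rideal p) = rideal r"
    using assms unfolding join_choice_def by blast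
  then show ?thesis using rideal_self by (cases "J U") auto
qed

lemma Ta_mult:
  assumes "contractive_rep T" "adjoint_family T Ta"
  shows "Ta (p * x) y = Ta x (Ta p y)"
proof -
  have "\<forall>u. inner u (Ta (p * x) y) = inner u (Ta x (Ta p y))"
  proof
    fix u
    have "inner u (Ta (p * x) y) = inner (T (p * x) u) y" using assms(2) unfolding adjoint_family_def by simp
    also have "\<dots> = inner (T p (T x u)) y" using assms(1) unfolding contractive_rep_def by simp
    also have "\<dots> = inner (T x u) (Ta p y)" using assms(2) unfolding adjoint_family_def by simp
    also have "\<dots> = inner u (Ta x (Ta p y))" using assms(2) unfolding adjoint_family_def by simp
    finally show "inner u (Ta (p * x) y) = inner u (Ta x (Ta p y))" .
  qed
  then show ?thesis using vector_eq_ldot by blast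
qed

lemma Ta_one:
  assumes "contractive_rep T" "adjoint_family T Ta"
  shows "Ta 1 y = y"
proof -
  have "\<forall>u. inner u (Ta 1 y) = inner u y"
    using assms unfolding adjoint_family_def contractive_rep_def by (metis id_blinfun.rep_eq id_apply)
  then show ?thesis using vector_eq_ldot by blast
qed

lemma Ta_contr:
  assumes "contractive_rep T" "adjoint_family T Ta"
  shows "norm (Ta x z) \<le> norm z"
proof -
  have "(norm (Ta x z))^2 = inner (Ta x z) (Ta x z)" by (simp add: power2_norm_eq_inner)
  also have "\<dots> = inner (T x (Ta x z)) z" using assms(2) unfolding adjoint_family_def by simp
  also have "\<dots> \<le> norm (T x (Ta x z)) * norm z" by (rule norm_cauchy_schwarz)
  also have "\<dots> \<le> norm (Ta x z) * norm z"
  proof -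
    have "norm (T x (Ta x z)) \<le> norm (T x) * norm (Ta x z)" by (rule norm_blinfun)
    also have "\<dots> \<le> norm (Ta x z)" using assms(1) unfolding contractive_rep_def
      by (simp add: mult_left_le_one_le)
    finally show ?thesis by (simp add: mult_right_mono)
  qed
  finally have "norm (Ta x z) * norm (Ta x z) \<le> norm (Ta x z) * norm z" by (simp add: power2_eq_square)
  then show ?thesis
    by (cases "norm (Ta x z) = 0") (auto simp: mult_le_cancel_left)
qed

lemma Ta_norm_eq:
  assumes "contractive_rep T" "adjoint_family T Ta" "rideal r = rideal r'"
  shows "norm (Ta r h) = norm (Ta r' h)"
proof -
  have le: "norm (Ta a h) \<le> norm (Ta b h)" if ab: "a \<in> rideal b" for a b
  proof -
    obtain x where "a = b * x" using ab unfolding rideal_def by auto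
    then have "Ta a h = Ta x (Ta b h)" using Ta_mult[OF assms(1,2)] by simp
    then show ?thesis using Ta_contr[OF assms(1,2)] by simp
  qed
  show ?thesis using le[of r r'] le[of r' r] assms(3) rideal_self[of r] rideal_self[of r'] by auto
qed



lemma B_ideal:
  assumes "join_choice J" "contractive_rep T" "adjoint_family T Ta" "finite U" "finite V"
    "(\<Inter>p\<in>U. rideal p) = (\<Inter>p\<in>V. rideal p)"
  shows "norm (Tjoin J Ta U h) = norm (Tjoin J Ta V h)"
proof -
  have u1: "J U = None \<longleftrightarrow> (\<Inter>p\<in>U. rideal p) = {}" and u2: "\<And>r. J U = Some r \<Longrightarrow> (\<Inter>p\<in>U. rideal p) = rideal r"
    using jc_props[OF assms(1,4)] by blast+
  have v1: "J V = None \<longleftrightarrow> (\<Inter>p\<in>V. rideal p) = {}" and v2: "\<And>r. J V = Some r \<Longrightarrow> (\<Inter>p\<in>V. rideal p) = rideal r"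
    using jc_props[OF assms(1,5)] by blast+
  show ?thesis
  proof (cases "J U")
    case None
    then have "J V = None" using u1 v1 assms(6) by metis
    then show ?thesis using None unfolding Tjoin_def by simp
  next
    case (Some r)
    then have "(\<Inter>p\<in>V. rideal p) = rideal r" using u2 assms(6) by metis
    then have "J V \<noteq> None" using v1 rideal_self[of r] by auto
    then obtain r' where r': "J V = Some r'" by auto
    have "rideal r = rideal r'" using u2[OF Some] v2[OF r'] assms(6) by metis
    then have "norm (Ta r h) = norm (Ta r' h)" by (rule Ta_norm_eq[OF assms(2,3)])
    then show ?thesis using Some r' unfolding Tjoin_def by simp
  qed
qed

lemma Z_inner:
  assumes "adjoint_family T Ta"
  shows "inner (Zop J T Ta G h) h = (\<Sum>U\<in>Pow G. (-1)^card U * (norm (Tjoin J Ta U h))^2)"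
  unfolding Zop_def inner_sum_left inner_scaleR_left
proof (rule sum.cong[OF refl])
  fix U
  have "inner (Tjoin J T U (Tjoin J Ta U h)) h = (norm (Tjoin J Ta U h))^2"
  proof (cases "J U")
    case None then show ?thesis unfolding Tjoin_def by simp
  next
    case (Some r)
    then have "inner (Tjoin J T U (Tjoin J Ta U h)) h = inner (Ta r h) (Ta r h)"
      using assms unfolding Tjoin_def adjoint_family_def by simp
    then show ?thesis using Some unfolding Tjoin_def by (simp add: power2_norm_eq_inner)
  qed
  then show "(-1)^card U * inner (Tjoin J T U (Tjoin J Ta U h)) h = (-1)^card U * (norm (Tjoin J Ta U h))^2"
    by simp
qed

lemma Sk_nonneg:
  fixes T Ta :: "'p::monoid_mult \<Rightarrow> ('h::{real_inner, complete_space} \<Rightarrow>\<^sub>L 'h)"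
  assumes jc: "join_choice J" and cr: "contractive_rep T" and af: "adjoint_family T Ta"
    and pos: "\<And>G. finite G \<Longrightarrow> positive_op (Zop J T Ta G)"
    and fF: "finite F"
  shows "Sk F (\<lambda>U. (norm (Tjoin J Ta U h))^2) k \<ge> 0"
proof -
  define B where "B U = (norm (Tjoin J Ta U h))^2" for U
  define G where "G = {U \<in> Cs F k. J U \<noteq> None}"
  define j where "j U = the (J U)" for U
  have finC: "finite (Cs F k)" by (rule finite_Cs[OF fF])
  have finG: "finite G" using finC G_def by simp
  have CF: "\<And>U. U \<in> Cs F k \<Longrightarrow> U \<subseteq> F" unfolding Cs_def by simp
  have I_Un: "\<And>W. (\<Inter>p\<in>\<Union>W. rideal p) = (\<Inter>U\<in>W. \<Inter>p\<in>U. rideal p)" by auto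
  have step1: "Sk F B k = (\<Sum>W\<in>Pow G. (-1)^card W * B (\<Union>W))"
    unfolding Sk_def
  proof (rule sum.mono_neutral_right)
    show "finite (Pow (Cs F k))" using finC by simp
    show "Pow G \<subseteq> Pow (Cs F k)" using G_def by auto
    show "\<forall>W\<in>Pow (Cs F k) - Pow G. (-1)^card W * B (\<Union>W) = 0"
    proof
      fix W assume W: "W \<in> Pow (Cs F k) - Pow G"
      then obtain U where U: "U \<in> W" "U \<in> Cs F k" "J U = None" using G_def by auto
      have fU: "finite U" using CF[OF U(2)] fF finite_subset by blast
      have "\<Union>W \<subseteq> F" using W CF by blast
      then have fW: "finite (\<Union>W)" by (rule finite_subset[OF _ fF])
      have "(\<Inter>p\<in>U. rideal p) = {}" using jc_props[OF jc fU] U(3) by simp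
      moreover have "(\<Inter>p\<in>\<Union>W. rideal p) \<subseteq> (\<Inter>p\<in>U. rideal p)"
        using U(1) by (intro INT_anti_mono) auto
      ultimately have "(\<Inter>p\<in>\<Union>W. rideal p) = {}" by simp
      then have "J (\<Union>W) = None" using jc_props[OF jc fW] by simp
      then show "(-1)^card W * B (\<Union>W) = 0" unfolding B_def Tjoin_def by simp
    qed
  qed
  have step2: "(\<Sum>W\<in>Pow G. (-1)^card W * B (\<Union>W)) = (\<Sum>W\<in>Pow G. (-1)^card W * B (j ` W))"
  proof (rule sum.cong[OF refl])
    fix W assume W: "W \<in> Pow G"
    then have finW: "finite W" using finG finite_subset by blast
    have "\<Union>W \<subseteq> F" using W CF G_def by blast
    then have fW: "finite (\<Union>W)" by (rule finite_subset[OF _ fF])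
    have "\<And>U. U \<in> W \<Longrightarrow> (\<Inter>p\<in>U. rideal p) = rideal (j U)"
    proof -
      fix U assume "U \<in> W"
      then have "U \<in> G" using W by blast
      then have "U \<subseteq> F" "J U = Some (j U)" using G_def CF j_def by auto
      then show "(\<Inter>p\<in>U. rideal p) = rideal (j U)"
        using jc_props[OF jc finite_subset[OF _ fF]] by blast
    qed
    then have "(\<Inter>U\<in>W. \<Inter>p\<in>U. rideal p) = (\<Inter>U\<in>W. rideal (j U))" by simp
    then have "(\<Inter>p\<in>\<Union>W. rideal p) = (\<Inter>p\<in>j ` W. rideal p)" unfolding I_Un by (simp add: image_image)
    then show "(-1)^card W * B (\<Union>W) = (-1)^card W * B (j ` W)"
      using B_ideal[OF jc cr af fW finite_imageI[OF finW], where h=h] unfolding B_def by simp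
  qed
  have step3: "(\<Sum>W\<in>Pow G. (-1)^card W * B (j ` W)) = (\<Sum>V\<in>Pow (j ` G). (-1)^card V * B V)"
    by (rule fiber_sum[OF finG])
  have step4: "(\<Sum>V\<in>Pow (j ` G). (-1)^card V * B V) = inner (Zop J T Ta (j ` G) h) h"
    unfolding Z_inner[OF af] B_def ..
  have "inner (Zop J T Ta (j ` G) h) h \<ge> 0"
    using pos[of "j ` G"] finG unfolding positive_op_def by simp
  then show ?thesis using step1 step2 step3 step4 unfolding B_def[abs_def] by simp
qed

theorem lemma4p1:
  fixes T Ta :: "'p::monoid_mult \<Rightarrow> ('h::{real_inner, complete_space} \<Rightarrow>\<^sub>L 'h)"
    and J :: "'p set \<Rightarrow> 'p option"
    and F :: "'p set" and h :: 'h
  assumes "right_LCM TYPE('p)"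
    and "join_choice J"
    and "contractive_rep T"
    and "adjoint_family T Ta"
    and "\<And>G. finite G \<Longrightarrow> positive_op (Zop J T Ta G)"
    and "finite F"
  shows "(\<Sum>p\<in>F. (norm (Ta p h))\<^sup>2) \<le> real (cF J F) * (norm h)\<^sup>2"
proof -
  define B where "B = (\<lambda>U. (norm (Tjoin J Ta U h))^2)"
  define c where "c = cF J F"
  have finS: "finite {card U |U. U \<subseteq> F \<and> J U \<noteq> None}"
    by (rule finite_subset[of _ "card ` Pow F"]) (auto simp: assms(6))
  have zero: "\<And>V. V \<subseteq> F \<Longrightarrow> card V > c \<Longrightarrow> B V = 0"
  proof -
    fix V assume V: "V \<subseteq> F" "card V > c"
    have "J V = None"
    proof (rule ccontr)
      assume "J V \<noteq> None"
      then have "card V \<in> {card U |U. U \<subseteq> F \<and> J U \<noteq> None}" using V(1) by blast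
      then have "card V \<le> c" unfolding c_def cF_def by (rule Max_ge[OF finS])
      then show False using V(2) by simp
    qed
    then show "B V = 0" unfolding B_def Tjoin_def by simp
  qed
  have ident: "(\<Sum>k\<in>{1..c}. Sk F B k) = real c * B {} - (\<Sum>p\<in>F. B {p})"
    by (rule main_identity[OF assms(6) zero])
  have nn: "(\<Sum>k\<in>{1..c}. Sk F B k) \<ge> 0"
    by (rule sum_nonneg) (unfold B_def, rule Sk_nonneg[OF assms(2-6)])
  have B0: "B {} = (norm h)^2"
  proof -
    have "J {} = Some 1" using assms(2) unfolding join_choice_def by simp
    then show ?thesis unfolding B_def Tjoin_def using Ta_one[OF assms(3,4)] by simp
  qed
  have Bp: "B {p} = (norm (Ta p h))^2" for p
  proof -
    have j1: "J {p} = None \<longleftrightarrow> rideal p = {}" and j2: "\<And>r. J {p} = Some r \<Longrightarrow> rideal p = rideal r"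
      using jc_props[OF assms(2), of "{p}"] by auto
    have "J {p} \<noteq> None" using j1 rideal_self[of p] by auto
    then obtain r where r: "J {p} = Some r" by auto
    have "norm (Ta r h) = norm (Ta p h)" by (rule Ta_norm_eq[OF assms(3,4) j2[OF r, symmetric]])
    then show ?thesis unfolding B_def Tjoin_def using r by simp
  qed
  have "(\<Sum>p\<in>F. (norm (Ta p h))\<^sup>2) = (\<Sum>p\<in>F. B {p})" using Bp by simp
  also have "\<dots> = real c * B {} - (\<Sum>k\<in>{1..c}. Sk F B k)" using ident by simp
  also have "\<dots> \<le> real c * (norm h)\<^sup>2" using nn B0 by simp
  finally show ?thesis unfolding c_def .
qed

end
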